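(* Let $d\ge 1$, $\nu>0$, $\sigma>0$. Let $\mathbf{X}$ be a centered Gaussian random vector in $\mathbb{R}^d$ with covariance matrix $\sigma^2 I_d$, and let $\mathbf{T}$ be a random vector in $\mathbb{R}^d$, independent of $\mathbf{X}$, with the Student density $f_\nu(\mathbf{t})=A_{\nu,d}(1+\Vert\mathbf{t}\Vert^2)^{-\nu-\frac d2}$, where $A_{\nu,d}=\frac{\Gamma(\nu+\frac d2)}{\Gamma(\nu)\pi^{d/2}}$. Set $\gamma=\frac{1}{\sigma\sqrt2}$. Then the density of $\mathbf{Z}=\mathbf{X}+\mathbf{T}$ is \[ f_{\mathbf{Z}}(\mathbf{z})=\sum_{k=0}^{\infty}\alpha_k^{(\nu,\gamma)}g_{k,\sigma}(\mathbf{z}),\qquad \mathbf{z}\in\mathbb{R}^d, \] where \[ \alpha_k^{(\nu,\gamma)}=\frac{\Gamma(k+\frac d2)}{k!\,\Gamma(\frac d2)\Gamma(\nu)}\gamma^{2k}\int_0^{\infty}e^{-a}a^{\nu+\frac d2-1}(a+\gamma^2)^{-k-\frac d2}\,da,\qquad k\ge 0, \] are positive coefficients with $\sum_{k\ge0}\alpha_k^{(\nu,\gamma)}=1$.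
   Context: For $k\in\mathbb{N}$ and $\sigma>0$, $g_{k,\sigma}$ is the probability density on $\mathbb{R}^d$ \[ g_{k,\sigma}(\mathbf{z})=\frac{\Gamma(\frac d2)}{\Gamma(k+\frac d2)(\sigma\sqrt{2\pi})^d}\left(\frac{\Vert\mathbf{z}\Vert^2}{2\sigma^2}\right)^k\exp\left(-\frac{\Vert\mathbf{z}\Vert^2}{2\sigma^2}\right). \] The Student density $f_\nu$ corresponds to $2\nu$ degrees of freedom. *)

theory Defs
  imports "HOL-Probability.Probability"
begin

text \<open>Throughout, the ambient space is a Euclidean space of type 'a with d = DIM('a).\<close>

definition gauss_dens :: "real \<Rightarrow> 'a::euclidean_space \<Rightarrow> real" where
  "gauss_dens \<sigma> x = exp (- (norm x)\<^sup>2 / (2 * \<sigma>\<^sup>2)) / (\<sigma> * sqrt (2 * pi)) ^ DIM('a)"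

definition student_dens :: "real \<Rightarrow> 'a::euclidean_space \<Rightarrow> real" where
  "student_dens \<nu> t =
     Gamma (\<nu> + real DIM('a) / 2) / (Gamma \<nu> * pi powr (real DIM('a) / 2))
     * (1 + (norm t)\<^sup>2) powr (- \<nu> - real DIM('a) / 2)"

definition g_dens :: "nat \<Rightarrow> real \<Rightarrow> 'a::euclidean_space \<Rightarrow> real" where
  "g_dens k \<sigma> z =
     Gamma (real DIM('a) / 2) / (Gamma (real k + real DIM('a) / 2) * (\<sigma> * sqrt (2 * pi)) ^ DIM('a))
     * ((norm z)\<^sup>2 / (2 * \<sigma>\<^sup>2)) ^ k * exp (- (norm z)\<^sup>2 / (2 * \<sigma>\<^sup>2))"

definition alpha_coef :: "nat \<Rightarrow> real \<Rightarrow> real \<Rightarrow> nat \<Rightarrow> real" where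
  "alpha_coef d \<nu> \<gamma> k =
     Gamma (real k + real d / 2) / (fact k * Gamma (real d / 2) * Gamma \<nu>) * \<gamma> ^ (2 * k)
     * (LBINT a:{0<..}. exp (- a) * a powr (\<nu> + real d / 2 - 1)
                         * (a + \<gamma>\<^sup>2) powr (- real k - real d / 2))"

end

theory Submission
  imports Defs
begin


lemma nn_integral_lborel_affine_eucl:
  fixes f :: "'a::euclidean_space \<Rightarrow> ennreal" and c :: real
  assumes [measurable]: "f \<in> borel_measurable borel" and c: "c \<noteq> 0"
  shows "(\<integral>\<^sup>+x. f x \<partial>lborel) = ennreal (\<bar>c\<bar> ^ DIM('a)) * (\<integral>\<^sup>+x. f (t + c *\<^sub>R x) \<partial>lborel)"
  by (subst lborel_affine[OF c, of t])
     (simp add: nn_integral_density nn_integral_distr nn_integral_cmult)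

lemma gauss_scale:
  fixes c c' :: real
  assumes c: "c > 0" and c': "c' > 0"
  shows "(\<integral>\<^sup>+x. ennreal (exp (- c * (norm (x::'a::euclidean_space))\<^sup>2)) \<partial>lborel)
       = ennreal (sqrt (c' / c) ^ DIM('a)) * (\<integral>\<^sup>+x. ennreal (exp (- c' * (norm (x::'a))\<^sup>2)) \<partial>lborel)"
proof -
  define l where "l = sqrt (c / c')"
  have l: "l > 0" using c c' by (simp add: l_def)
  have l2: "c' * l\<^sup>2 = c" using c c' by (simp add: l_def)
  have "(\<integral>\<^sup>+x. ennreal (exp (- c' * (norm (x::'a))\<^sup>2)) \<partial>lborel)
      = ennreal (\<bar>l\<bar> ^ DIM('a)) * (\<integral>\<^sup>+x. ennreal (exp (- c' * (norm (0 + l *\<^sub>R (x::'a)))\<^sup>2)) \<partial>lborel)"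
    by (rule nn_integral_lborel_affine_eucl[where f="\<lambda>x::'a. ennreal (exp (- c' * (norm x)\<^sup>2))" and c=l and t=0]) (use l in auto)
  also have "(\<lambda>x::'a. ennreal (exp (- c' * (norm (0 + l *\<^sub>R x))\<^sup>2))) = (\<lambda>x. ennreal (exp (- c * (norm x)\<^sup>2)))"
    using l l2 by (auto simp: power_mult_distrib simp flip: l2 intro!: ext arg_cong[where f=ennreal]) 
  finally have *: "(\<integral>\<^sup>+x. ennreal (exp (- c' * (norm (x::'a))\<^sup>2)) \<partial>lborel)
      = ennreal (l ^ DIM('a)) * (\<integral>\<^sup>+x. ennreal (exp (- c * (norm (x::'a))\<^sup>2)) \<partial>lborel)" using l by simp
  have "sqrt (c' / c) * l = 1" using c c' by (simp add: l_def real_sqrt_mult[symmetric])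
  then have "ennreal (sqrt (c' / c) ^ DIM('a)) * ennreal (l ^ DIM('a)) = 1"
    using l c c' by (simp add: ennreal_mult'[symmetric] power_mult_distrib[symmetric])
  then show ?thesis unfolding * by (simp add: mult.assoc[symmetric])
qed

lemma gamma_scaled:
  fixes s c :: real
  assumes s: "s > 0" and c: "c > 0"
  shows "(\<integral>\<^sup>+a. ennreal (indicator {0<..} a * a powr (s - 1) * exp (- c * a)) \<partial>lborel)
       = ennreal (Gamma s / c powr s)"
proof -
  have "ennreal (Gamma s) = (\<integral>\<^sup>+t. ennreal (indicator {0..} t * t powr (s - 1) / exp t) \<partial>lborel)"
    using Gamma_conv_nn_integral_real[OF s] by simp
  also have "\<dots> = ennreal \<bar>c\<bar> * (\<integral>\<^sup>+x. ennreal (indicator {0..} (0 + c * x) * (0 + c * x) powr (s - 1) / exp (0 + c * x)) \<partial>lborel)"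
    by (rule nn_integral_real_affine) (use c in auto)
  also have "(\<lambda>x. ennreal (indicator {0..} (0 + c * x) * (0 + c * x) powr (s - 1) / exp (0 + c * x)))
      = (\<lambda>x. ennreal (c powr (s - 1)) * ennreal (indicator {0<..} x * x powr (s - 1) * exp (- c * x)))"
  proof
    fix x
    show "ennreal (indicator {0..} (0 + c * x) * (0 + c * x) powr (s - 1) / exp (0 + c * x))
      = ennreal (c powr (s - 1)) * ennreal (indicator {0<..} x * x powr (s - 1) * exp (- c * x))"
      using c by (cases "x > 0") (auto simp: ennreal_mult'[symmetric] powr_mult exp_minus field_simps indicator_def zero_le_mult_iff)
  qed
  also have "ennreal \<bar>c\<bar> * (\<integral>\<^sup>+x. ennreal (c powr (s - 1)) * ennreal (indicator {0<..} x * x powr (s - 1) * exp (- c * x)) \<partial>lborel) = ennreal \<bar>c\<bar> * (ennreal (c powr (s - 1)) * (\<integral>\<^sup>+x. ennreal (indicator {0<..} x * x powr (s - 1) * exp (- c * x)) \<partial>lborel))"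
    by (subst nn_integral_cmult) auto
  also have "\<dots> = ennreal (c powr s) * (\<integral>\<^sup>+x. ennreal (indicator {0<..} x * x powr (s - 1) * exp (- c * x)) \<partial>lborel)"
  proof -
    have "c * c powr (s - 1) = c powr s" using c by (simp add: powr_diff)
    then have "ennreal \<bar>c\<bar> * ennreal (c powr (s - 1)) = ennreal (c powr s)"
      using c by (simp add: ennreal_mult'[symmetric])
    then show ?thesis by (simp add: mult.assoc[symmetric])
  qed
  finally have eq: "ennreal (Gamma s) = ennreal (c powr s) * (\<integral>\<^sup>+x. ennreal (indicator {0<..} x * x powr (s - 1) * exp (- c * x)) \<partial>lborel)" .
  have "ennreal (Gamma s / c powr s) = ennreal (Gamma s) * ennreal (1 / c powr s)"
    using c Gamma_real_pos[OF s] by (subst ennreal_mult[symmetric]) auto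
  also have "\<dots> = (ennreal (1 / c powr s) * ennreal (c powr s)) * (\<integral>\<^sup>+x. ennreal (indicator {0<..} x * x powr (s - 1) * exp (- c * x)) \<partial>lborel)"
    unfolding eq by (simp add: mult_ac)
  also have "ennreal (1 / c powr s) * ennreal (c powr s) = 1"
    using c by (simp add: ennreal_mult'[symmetric])
  finally show ?thesis by simp
qed



lemma nn_integral_lborel_translate:
  fixes f :: "'a::euclidean_space \<Rightarrow> ennreal"
  assumes [measurable]: "f \<in> borel_measurable borel"
  shows "(\<integral>\<^sup>+x. f x \<partial>lborel) = (\<integral>\<^sup>+x. f (t + x) \<partial>lborel)"
proof -
  have "(\<integral>\<^sup>+x. f x \<partial>lborel) = (\<integral>\<^sup>+x. f x \<partial>distr lborel borel ((+) t))"
    by (simp add: lborel_distr_plus)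
  also have "\<dots> = (\<integral>\<^sup>+x. f (t + x) \<partial>lborel)"
    by (subst nn_integral_distr) auto
  finally show ?thesis .
qed

lemma convolution_density_eucl:
  fixes f g :: "'a::euclidean_space \<Rightarrow> ennreal"
  assumes [measurable]: "f \<in> borel_measurable borel" "g \<in> borel_measurable borel"
  assumes fin: "finite_measure (density lborel f)" "finite_measure (density lborel g)"
  shows "distr (density lborel f \<Otimes>\<^sub>M density lborel g) borel (\<lambda>(x, y). x + y)
       = density lborel (\<lambda>x. \<integral>\<^sup>+y. f (x - y) * g y \<partial>lborel)"
    (is "?l = ?r")
proof (intro measure_eqI)
  interpret F: finite_measure "density lborel f" by fact
  interpret G: finite_measure "density lborel g" by fact
  interpret FG: pair_sigma_finite "density lborel f" "density lborel g" ..
  fix A assume "A \<in> sets ?l"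
  then have [measurable]: "A \<in> sets borel"
    by simp
  have "emeasure ?l A = (\<integral>\<^sup>+z. indicator A z \<partial>?l)" by simp
  also have "\<dots> = (\<integral>\<^sup>+p. indicator A (fst p + snd p) \<partial>(density lborel f \<Otimes>\<^sub>M density lborel g))"
    by (subst nn_integral_distr) (auto simp: case_prod_beta)
  also have "\<dots> = (\<integral>\<^sup>+x. \<integral>\<^sup>+y. indicator A (x + y) \<partial>density lborel g \<partial>density lborel f)"
    by (subst G.nn_integral_fst[symmetric]) auto
  also have "\<dots> = (\<integral>\<^sup>+x. f x * (\<integral>\<^sup>+y. g y * indicator A (x + y) \<partial>lborel) \<partial>lborel)"
    by (simp add: nn_integral_density)
  also have "\<dots> = (\<integral>\<^sup>+x. (\<integral>\<^sup>+y. g y * (f x * indicator A (x + y)) \<partial>lborel) \<partial>lborel)"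
  proof (rule nn_integral_cong)
    fix x
    have "f x * (\<integral>\<^sup>+ y. g y * indicator A (x + y) \<partial>lborel) =
      (\<integral>\<^sup>+ y. f x * (g y * indicator A (x + y)) \<partial>lborel)"
      by (intro nn_integral_cmult[symmetric]) auto
    then show "f x * (\<integral>\<^sup>+ y. g y * indicator A (x + y) \<partial>lborel) =
      (\<integral>\<^sup>+ y. g y * (f x * indicator A (x + y)) \<partial>lborel)"
      by (simp add: ac_simps)
  qed
  also have "\<dots> = (\<integral>\<^sup>+y. (\<integral>\<^sup>+x. g y * (f x * indicator A (x + y)) \<partial>lborel) \<partial>lborel)"
    by (intro lborel_pair.Fubini') simp
  also have "\<dots> = (\<integral>\<^sup>+y. (\<integral>\<^sup>+x. f (x - y) * g y * indicator A x \<partial>lborel) \<partial>lborel)"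
  proof (rule nn_integral_cong)
    fix y
    have "(\<integral>\<^sup>+x. g y * (f x * indicator A (x + y)) \<partial>lborel) =
      g y * (\<integral>\<^sup>+x. f x * indicator A (x + y) \<partial>lborel)"
      by (intro nn_integral_cmult) auto
    also have "\<dots> = g y * (\<integral>\<^sup>+x. f (x - y) * indicator A x \<partial>lborel)"
      by (subst nn_integral_lborel_translate[where t="-y"]) (auto simp: algebra_simps)
    also have "\<dots> = (\<integral>\<^sup>+x. g y * (f (x - y) * indicator A x) \<partial>lborel)"
      by (intro nn_integral_cmult[symmetric]) auto
    finally show "(\<integral>\<^sup>+ x. g y * (f x * indicator A (x + y)) \<partial>lborel) =
      (\<integral>\<^sup>+ x. f (x - y) * g y * indicator A x \<partial>lborel)"
      by (simp add: ac_simps)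
  qed
  also have "\<dots> = (\<integral>\<^sup>+x. (\<integral>\<^sup>+y. f (x - y) * g y * indicator A x \<partial>lborel) \<partial>lborel)"
    by (intro lborel_pair.Fubini') simp
  also have "\<dots> = emeasure ?r A"
    by (auto simp: emeasure_density nn_integral_multc)
  finally show "emeasure ?l A = emeasure ?r A" .
qed simp

lemma (in prob_space) distributed_add_eucl:
  fixes X Y :: "'a \<Rightarrow> 'c::euclidean_space"
  assumes indep: "indep_var borel X borel Y"
  assumes X: "distributed M lborel X f"
  assumes Y: "distributed M lborel Y g"
  shows "distributed M lborel (\<lambda>x. X x + Y x) (\<lambda>x. \<integral>\<^sup>+y. f (x - y) * g y \<partial>lborel)"
  unfolding distributed_def
proof safe
  have fg[measurable]: "f \<in> borel_measurable borel" "g \<in> borel_measurable borel"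
    using distributed_borel_measurable[OF X] distributed_borel_measurable[OF Y] by simp_all
  show "(\<lambda>x. \<integral>\<^sup>+ xa. f (x - xa) * g xa \<partial>lborel) \<in> borel_measurable lborel"
    by measurable
  have [measurable]: "random_variable borel X" "random_variable borel Y"
    using distributed_measurable[OF X] distributed_measurable[OF Y] by auto
  have "distr M borel (\<lambda>x. X x + Y x) = distr (distr M borel X \<Otimes>\<^sub>M distr M borel Y) borel (\<lambda>(x, y). x + y)"
    using indep unfolding indep_var_distribution_eq
    by (auto simp: distr_distr intro!:arg_cong[where f = "distr M borel"])
  also have "\<dots> = distr (density lborel f \<Otimes>\<^sub>M density lborel g) borel (\<lambda>(x, y). x + y)"
    using distributed_distr_eq_density[OF X] distributed_distr_eq_density[OF Y]
    by (simp cong: distr_cong)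
  also have "\<dots> = density lborel (\<lambda>x. \<integral>\<^sup>+ y. f (x - y) * g y \<partial>lborel)"
  proof (rule convolution_density_eucl)
    show "finite_measure (density lborel f)"
      using X by (rule distributed_finite_measure_density)
    show "finite_measure (density lborel g)"
      using Y by (rule distributed_finite_measure_density)
  qed fact+
  finally show "distr M lborel (\<lambda>x. X x + Y x) = density lborel (\<lambda>x. \<integral>\<^sup>+ y. f (x - y) * g y \<partial>lborel)"
    by (simp cong: distr_cong)
  show "random_variable lborel (\<lambda>x. X x + Y x)"
    using distributed_measurable[OF X] distributed_measurable[OF Y] by simp
qed



lemma negbin_series:
  fixes p u b :: real
  assumes p: "p > 0" and u: "u > 0" and b: "b \<ge> 0"
  shows "(\<lambda>k. Gamma (real k + p) / (fact k * Gamma p) * b ^ k * (u + b) powr (- real k - p)) sums u powr (- p)"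
proof -
  have "\<bar>- b\<bar> < u + b" using u b by simp
  from gen_binomial_real''[OF this, of "- p"]
  have "(\<lambda>n. (- p gchoose n) * (u + b) powr (- p - real n) * (- b) ^ n) sums (u + b + - b) powr (- p)" .
  moreover have "(- p gchoose n) * (u + b) powr (- p - real n) * (- b) ^ n
      = Gamma (real n + p) / (fact n * Gamma p) * b ^ n * (u + b) powr (- real n - p)" for n
  proof -
    have np: "p \<notin> \<int>\<^sub>\<le>\<^sub>0" using p by (auto elim!: nonpos_Ints_cases)
    have "(- p gchoose n) * (- b) ^ n = pochhammer p n / fact n * b ^ n"
      by (simp add: gbinomial_pochhammer power_mult_distrib[symmetric] flip: power_minus)
    also have "pochhammer p n = Gamma (p + real n) / Gamma p"
      using pochhammer_Gamma[OF np] by simp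
    finally have h: "(- p gchoose n) * (- b) ^ n = Gamma (real n + p) / (fact n * Gamma p) * b ^ n" by (simp add: add.commute)
    have "(- p gchoose n) * (u + b) powr (- p - real n) * (- b) ^ n = ((- p gchoose n) * (- b) ^ n) * (u + b) powr (- real n - p)"
    proof -
      have e: "(u + b) powr (- p - real n) = (u + b) powr (- real n - p)" by (rule arg_cong[where f="\<lambda>e. (u+b) powr e"]) simp
      show ?thesis unfolding e by (simp add: mult_ac)
    qed
    then show ?thesis unfolding h .
  qed
  ultimately show ?thesis by simp
qed

lemma gauss_value:
  fixes \<sigma> c :: real
  assumes \<sigma>: "\<sigma> > 0" and c: "c > 0"
    and one: "(\<integral>\<^sup>+x. ennreal (gauss_dens \<sigma> (x::'a::euclidean_space)) \<partial>lborel) = 1"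
  shows "(\<integral>\<^sup>+x. ennreal (exp (- c * (norm (x::'a))\<^sup>2)) \<partial>lborel) = ennreal ((pi / c) powr (real DIM('a) / 2))"
proof -
  define b where "b = 1 / (2 * \<sigma>\<^sup>2)"
  define N where "N = (\<sigma> * sqrt (2 * pi)) ^ DIM('a)"
  have b: "b > 0" and N: "N > 0" using \<sigma> by (auto simp: b_def N_def)
  have gd: "gauss_dens \<sigma> x = (1 / N) * exp (- b * (norm x)\<^sup>2)" for x :: 'a
    by (simp add: gauss_dens_def N_def b_def)
  have "1 = (\<integral>\<^sup>+x. ennreal (1 / N * exp (- b * (norm (x::'a))\<^sup>2)) \<partial>lborel)"
    unfolding one[symmetric] gd ..
  also have "\<dots> = ennreal (1 / N) * (\<integral>\<^sup>+x. ennreal (exp (- b * (norm (x::'a))\<^sup>2)) \<partial>lborel)"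
    using N by (subst nn_integral_cmult[symmetric]) (auto intro!: nn_integral_cong simp: ennreal_mult'[symmetric])
  finally have eq1: "1 = ennreal (1 / N) * (\<integral>\<^sup>+x. ennreal (exp (- b * (norm (x::'a))\<^sup>2)) \<partial>lborel)" .
  have NN: "ennreal N * ennreal (1 / N) = 1"
    using N by (simp flip: ennreal_mult')
  have Gb: "(\<integral>\<^sup>+x. ennreal (exp (- b * (norm (x::'a))\<^sup>2)) \<partial>lborel) = ennreal N"
  proof -
    have "ennreal N = ennreal N * (ennreal (1 / N) * (\<integral>\<^sup>+x. ennreal (exp (- b * (norm (x::'a))\<^sup>2)) \<partial>lborel))"
      by (subst eq1[symmetric]) simp
    also have "\<dots> = (\<integral>\<^sup>+x. ennreal (exp (- b * (norm (x::'a))\<^sup>2)) \<partial>lborel)"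
      by (simp add: mult.assoc[symmetric] NN)
    finally show ?thesis by simp
  qed
  have "(\<integral>\<^sup>+x. ennreal (exp (- c * (norm (x::'a))\<^sup>2)) \<partial>lborel) = ennreal (sqrt (b / c) ^ DIM('a)) * ennreal N"
    using gauss_scale[OF c b, where 'a='a] Gb by simp
  also have "\<dots> = ennreal (sqrt (b / c) ^ DIM('a) * N)" using N b c by (subst ennreal_mult) auto
  also have "sqrt (b / c) ^ DIM('a) * N = (sqrt (b / c) * (\<sigma> * sqrt (2 * pi))) ^ DIM('a)"
    by (simp add: N_def power_mult_distrib)
  also have "sqrt (b / c) * (\<sigma> * sqrt (2 * pi)) = sqrt (pi / c)"
  proof -
    have "sqrt (b / c) * (\<sigma> * sqrt (2 * pi)) = sqrt (b / c * \<sigma>\<^sup>2 * (2 * pi))"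
      using \<sigma> by (simp add: real_sqrt_mult real_sqrt_divide)
    also have "b / c * \<sigma>\<^sup>2 * (2 * pi) = pi / c" using \<sigma> by (simp add: b_def field_simps)
    finally show ?thesis .
  qed
  also have "sqrt (pi / c) ^ DIM('a) = (pi / c) powr (real DIM('a) / 2)"
    using c by (simp add: powr_half_sqrt[symmetric] powr_realpow[symmetric] powr_powr)
  finally show ?thesis .
qed



lemma student_repr:
  fixes \<nu> :: real and t :: "'a::euclidean_space"
  assumes \<nu>: "\<nu> > 0"
  shows "ennreal (student_dens \<nu> t) =
    (\<integral>\<^sup>+a. ennreal (1 / (Gamma \<nu> * pi powr (real DIM('a) / 2)) *
        (indicator {0<..} a * a powr (\<nu> + real DIM('a) / 2 - 1) * exp (- a) * exp (- a * (norm t)\<^sup>2))) \<partial>lborel)"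
proof -
  define s where "s = \<nu> + real DIM('a) / 2"
  define K where "K = 1 / (Gamma \<nu> * pi powr (real DIM('a) / 2))"
  define c where "c = 1 + (norm t)\<^sup>2"
  have s: "s > 0" using \<nu> by (simp add: s_def add_pos_nonneg)
  have c: "c > 0" by (simp add: c_def add_pos_nonneg)
  have K: "K > 0" using \<nu> by (simp add: K_def Gamma_real_pos)
  have "(\<integral>\<^sup>+a. ennreal (K * (indicator {0<..} a * a powr (s - 1) * exp (- a) * exp (- a * (norm t)\<^sup>2))) \<partial>lborel)
      = (\<integral>\<^sup>+a. ennreal K * ennreal (indicator {0<..} a * a powr (s - 1) * exp (- c * a)) \<partial>lborel)"
  proof (rule nn_integral_cong)
    fix a :: real
    have "exp (- a) * exp (- a * (norm t)\<^sup>2) = exp (- c * a)"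
      by (simp add: c_def exp_add[symmetric] algebra_simps)
    then show "ennreal (K * (indicator {0<..} a * a powr (s - 1) * exp (- a) * exp (- a * (norm t)\<^sup>2)))
      = ennreal K * ennreal (indicator {0<..} a * a powr (s - 1) * exp (- c * a))"
      using K by (simp add: ennreal_mult'[symmetric] mult.assoc)
  qed
  also have "\<dots> = ennreal K * ennreal (Gamma s / c powr s)"
    using gamma_scaled[OF s c] by (subst nn_integral_cmult) auto
  also have "\<dots> = ennreal (K * (Gamma s / c powr s))"
    using K by (simp add: ennreal_mult'[symmetric])
  also have "K * (Gamma s / c powr s) = student_dens \<nu> t"
  proof -
    have e: "c powr (- \<nu> - real DIM('a) / 2) = 1 / c powr s"
      unfolding s_def by (subst powr_minus_divide[symmetric]) (simp add: algebra_simps)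
    show ?thesis unfolding student_dens_def c_def[symmetric] e by (simp add: K_def s_def)
  qed
  finally show ?thesis by (simp add: K_def s_def)
qed

lemma Ik_props:
  fixes \<nu> b :: real and d k :: nat
  assumes \<nu>: "\<nu> > 0" and b: "b > 0"
  defines "f \<equiv> \<lambda>a. exp (- a) * a powr (\<nu> + real d / 2 - 1) * (a + b) powr (- real k - real d / 2)"
  shows "set_integrable lborel {0<..} f"
    and "ennreal (LBINT a:{0<..}. f a) = (\<integral>\<^sup>+a. ennreal (indicator {0<..} a * f a) \<partial>lborel)"
    and "(LBINT a:{0<..}. f a) > 0"
proof -
  define s where "s = \<nu> + real d / 2"
  have s: "s > 0" using \<nu> by (simp add: s_def add_pos_nonneg)
  have fnn: "0 \<le> indicator {0<..} a * f a" for a by (simp add: f_def indicator_def)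
  have bound: "indicator {0<..} a * f a \<le> b powr (- real k - real d / 2) * (indicator {0<..} a * a powr (s - 1) * exp (- 1 * a))" for a
  proof (cases "a > 0")
    case True
    have "(a + b) powr (- real k - real d / 2) \<le> b powr (- real k - real d / 2)"
      by (rule powr_mono2') (use True b in auto)
    then show ?thesis using True by (simp add: f_def s_def mult_left_mono mult.commute mult.left_commute)
  qed (simp add: indicator_def)
  have "(\<integral>\<^sup>+a. ennreal (indicator {0<..} a * f a) \<partial>lborel)
      \<le> (\<integral>\<^sup>+a. ennreal (b powr (- real k - real d / 2)) * ennreal (indicator {0<..} a * a powr (s - 1) * exp (- 1 * a)) \<partial>lborel)"
    by (intro nn_integral_mono) (use bound in \<open>auto simp: ennreal_mult'[symmetric]\<close>)
  also have "\<dots> = ennreal (b powr (- real k - real d / 2)) * ennreal (Gamma s / 1 powr s)"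
    using gamma_scaled[OF s, of 1] by (subst nn_integral_cmult) auto
  also have "\<dots> < \<infinity>" by (simp add: ennreal_mult_less_top)
  finally have fin: "(\<integral>\<^sup>+a. ennreal (indicator {0<..} a * f a) \<partial>lborel) < \<infinity>" .
  have int: "integrable lborel (\<lambda>a. indicator {0<..} a * f a)"
    by (rule integrableI_nonneg) (use fin fnn in \<open>auto simp: f_def\<close>)
  then show "set_integrable lborel {0<..} f"
    by (simp add: set_integrable_def)
  have eq: "(LBINT a:{0<..}. f a) = integral\<^sup>L lborel (\<lambda>a. indicator {0<..} a * f a)"
    by (simp add: set_lebesgue_integral_def)
  show "ennreal (LBINT a:{0<..}. f a) = (\<integral>\<^sup>+a. ennreal (indicator {0<..} a * f a) \<partial>lborel)"
    unfolding eq by (rule nn_integral_eq_integral[symmetric]) (use int fnn in auto)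
  have ge: "(LBINT a:{0<..}. f a) \<ge> 0" unfolding eq by (rule integral_nonneg_AE) (use fnn in auto)
  have ne: "(LBINT a:{0<..}. f a) \<noteq> 0"
  proof
    assume "(LBINT a:{0<..}. f a) = 0"
    then have "AE a in lborel. indicator {0<..} a * f a = 0"
      unfolding eq using integral_nonneg_eq_0_iff_AE[OF int] fnn by auto
    then have "AE a in lborel. a \<notin> {1..2::real}"
      by eventually_elim (use b in \<open>auto simp: f_def indicator_def split: if_splits\<close>)
    then have "emeasure lborel {1..2::real} = 0"
      by (subst (asm) AE_iff_measurable[where N="{1..2}"]) auto
    then show False by simp
  qed
  show "(LBINT a:{0<..}. f a) > 0" using ge ne by simp
qed



lemma sq_identity:
  fixes z t :: "'a::real_inner" and a b :: real
  assumes "a > 0" "b > 0"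
  shows "b * (norm (z - t))\<^sup>2 + a * (norm t)\<^sup>2
       = (a + b) * (norm (t - (b / (a + b)) *\<^sub>R z))\<^sup>2 + a * b / (a + b) * (norm z)\<^sup>2"
proof -
  define c where "c = b / (a + b)"
  have ab: "a + b > 0" using assms by simp
  have 1: "(norm (z - t))\<^sup>2 = z \<bullet> z - 2 * (z \<bullet> t) + t \<bullet> t"
    by (simp add: power2_norm_eq_inner inner_diff_left inner_diff_right inner_commute)
  have 2: "(norm (t - c *\<^sub>R z))\<^sup>2 = t \<bullet> t - 2 * c * (z \<bullet> t) + c\<^sup>2 * (z \<bullet> z)"
    unfolding power2_norm_eq_inner by (simp add: inner_diff_left inner_diff_right inner_commute power2_eq_square algebra_simps)
  have 3: "(norm z)\<^sup>2 = z \<bullet> z" "(norm t)\<^sup>2 = t \<bullet> t" by (simp_all add: power2_norm_eq_inner)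
  have "b * (z \<bullet> z - 2 * (z \<bullet> t) + t \<bullet> t) + a * (t \<bullet> t)
      = (a + b) * (t \<bullet> t - 2 * c * (z \<bullet> t) + c\<^sup>2 * (z \<bullet> z)) + a * b / (a + b) * (z \<bullet> z)"
  proof -
    have h1: "(a + b) * c = b" using ab by (simp add: c_def)
    have h2: "a * b / (a + b) = a * c" by (simp add: c_def)
    have "(a + b) * (t \<bullet> t - 2 * c * (z \<bullet> t) + c\<^sup>2 * (z \<bullet> z)) + a * b / (a + b) * (z \<bullet> z)
        = (a + b) * (t \<bullet> t) - 2 * ((a + b) * c) * (z \<bullet> t) + ((a + b) * c) * c * (z \<bullet> z) + a * c * (z \<bullet> z)"
      unfolding h2 by (simp add: algebra_simps power2_eq_square)
    also have "\<dots> = (a + b) * (t \<bullet> t) - 2 * b * (z \<bullet> t) + ((a + b) * c) * (z \<bullet> z)"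
    proof -
      have "b * c * (z \<bullet> z) + a * c * (z \<bullet> z) = ((a + b) * c) * (z \<bullet> z)" by (simp add: algebra_simps)
      then show ?thesis unfolding h1 by (simp add: algebra_simps)
    qed
    also have "\<dots> = b * (z \<bullet> z - 2 * (z \<bullet> t) + t \<bullet> t) + a * (t \<bullet> t)"
      unfolding h1 by (simp add: algebra_simps)
    finally show ?thesis by simp
  qed
  then show ?thesis unfolding 1 2 3 c_def[symmetric] .
qed

lemma gauss_conv:
  fixes a b :: real and z :: "'a::euclidean_space"
  assumes a: "a > 0" and b: "b > 0"
    and GV: "\<And>c. c > 0 \<Longrightarrow> (\<integral>\<^sup>+x. ennreal (exp (- c * (norm (x::'a))\<^sup>2)) \<partial>lborel) = ennreal ((pi / c) powr (real DIM('a) / 2))"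
  shows "(\<integral>\<^sup>+t. ennreal (exp (- b * (norm (z - t))\<^sup>2) * exp (- a * (norm t)\<^sup>2)) \<partial>lborel)
       = ennreal ((pi / (a + b)) powr (real DIM('a) / 2) * exp (- (a * b / (a + b)) * (norm z)\<^sup>2))"
proof -
  define m where "m = (b / (a + b)) *\<^sub>R z"
  have pt: "exp (- b * (norm (z - t))\<^sup>2) * exp (- a * (norm t)\<^sup>2)
      = exp (- (a * b / (a + b)) * (norm z)\<^sup>2) * exp (- (a + b) * (norm (t - m))\<^sup>2)" for t
  proof -
    have "exp (- b * (norm (z - t))\<^sup>2) * exp (- a * (norm t)\<^sup>2) = exp (- (b * (norm (z - t))\<^sup>2 + a * (norm t)\<^sup>2))"
      by (simp add: exp_add[symmetric])
    also have "\<dots> = exp (- ((a + b) * (norm (t - m))\<^sup>2 + a * b / (a + b) * (norm z)\<^sup>2))"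
      unfolding m_def using sq_identity[OF a b, of z t] by simp
    also have "\<dots> = exp (- (a * b / (a + b)) * (norm z)\<^sup>2) * exp (- (a + b) * (norm (t - m))\<^sup>2)"
      by (simp add: exp_add[symmetric] algebra_simps)
    finally show ?thesis .
  qed
  have "(\<integral>\<^sup>+t. ennreal (exp (- b * (norm (z - t))\<^sup>2) * exp (- a * (norm t)\<^sup>2)) \<partial>lborel)
      = (\<integral>\<^sup>+t. ennreal (exp (- (a * b / (a + b)) * (norm z)\<^sup>2)) * ennreal (exp (- (a + b) * (norm (t - m))\<^sup>2)) \<partial>lborel)"
    by (intro nn_integral_cong, subst pt, rule ennreal_mult) auto
  also have "\<dots> = ennreal (exp (- (a * b / (a + b)) * (norm z)\<^sup>2)) * (\<integral>\<^sup>+t. ennreal (exp (- (a + b) * (norm (t - m))\<^sup>2)) \<partial>lborel)"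
    by (rule nn_integral_cmult) auto
  also have "(\<integral>\<^sup>+t. ennreal (exp (- (a + b) * (norm (t - m))\<^sup>2)) \<partial>lborel)
      = (\<integral>\<^sup>+t. ennreal (exp (- (a + b) * (norm (m + t - m))\<^sup>2)) \<partial>lborel)"
    by (rule nn_integral_lborel_translate[where f="\<lambda>t. ennreal (exp (- (a + b) * (norm (t - m))\<^sup>2))", simplified add_diff_cancel_left']) auto
  also have "\<dots> = ennreal ((pi / (a + b)) powr (real DIM('a) / 2))"
    using GV[of "a + b"] a b by simp
  finally show ?thesis
    by (simp add: ennreal_mult mult.commute)
qed



lemma sums_ennreal: "(\<And>k. 0 \<le> g k) \<Longrightarrow> g sums S \<Longrightarrow> (\<Sum>k. ennreal (g k)) = ennreal S"
  by (metis suminf_ennreal2 sums_summable sums_unique)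

lemma alpha_ennreal:
  fixes \<nu> \<gamma> :: real and d k :: nat
  assumes \<nu>: "\<nu> > 0" and \<gamma>: "\<gamma> > 0" and d: "d > 0"
  shows "ennreal (alpha_coef d \<nu> \<gamma> k) = (\<integral>\<^sup>+a. ennreal (Gamma (real k + real d / 2) / (fact k * Gamma (real d / 2) * Gamma \<nu>) * (\<gamma>\<^sup>2) ^ k *
      (indicator {0<..} a * (exp (- a) * a powr (\<nu> + real d / 2 - 1) * (a + \<gamma>\<^sup>2) powr (- real k - real d / 2)))) \<partial>lborel)"
proof -
  define C where "C = Gamma (real k + real d / 2) / (fact k * Gamma (real d / 2) * Gamma \<nu>) * (\<gamma>\<^sup>2) ^ k"
  have C: "C > 0" using \<nu> \<gamma> d by (simp add: C_def Gamma_real_pos add_nonneg_pos)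
  have b: "\<gamma>\<^sup>2 > 0" using \<gamma> by simp
  have "alpha_coef d \<nu> \<gamma> k = C * (LBINT a:{0<..}. exp (- a) * a powr (\<nu> + real d / 2 - 1) * (a + \<gamma>\<^sup>2) powr (- real k - real d / 2))"
    by (simp add: alpha_coef_def C_def power_mult)
  then have "ennreal (alpha_coef d \<nu> \<gamma> k) = ennreal C * ennreal (LBINT a:{0<..}. exp (- a) * a powr (\<nu> + real d / 2 - 1) * (a + \<gamma>\<^sup>2) powr (- real k - real d / 2))"
    using C by (simp add: ennreal_mult'[symmetric])
  also have "\<dots> = ennreal C * (\<integral>\<^sup>+a. ennreal (indicator {0<..} a * (exp (- a) * a powr (\<nu> + real d / 2 - 1) * (a + \<gamma>\<^sup>2) powr (- real k - real d / 2))) \<partial>lborel)"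
    using Ik_props(2)[OF \<nu> b, of d k] by simp
  also have "\<dots> = (\<integral>\<^sup>+a. ennreal C * ennreal (indicator {0<..} a * (exp (- a) * a powr (\<nu> + real d / 2 - 1) * (a + \<gamma>\<^sup>2) powr (- real k - real d / 2))) \<partial>lborel)"
    by (rule nn_integral_cmult[symmetric]) auto
  also have "\<dots> = (\<integral>\<^sup>+a. ennreal (C * (indicator {0<..} a * (exp (- a) * a powr (\<nu> + real d / 2 - 1) * (a + \<gamma>\<^sup>2) powr (- real k - real d / 2)))) \<partial>lborel)"
    using C by (simp add: ennreal_mult'[symmetric])
  finally show ?thesis by (simp add: C_def)
qed

lemma alpha_pos:
  fixes \<nu> \<gamma> :: real and d k :: nat
  assumes \<nu>: "\<nu> > 0" and \<gamma>: "\<gamma> > 0" and d: "d > 0"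
  shows "alpha_coef d \<nu> \<gamma> k > 0"
proof -
  have b: "\<gamma>\<^sup>2 > 0" using \<gamma> by simp
  have C: "Gamma (real k + real d / 2) / (fact k * Gamma (real d / 2) * Gamma \<nu>) * \<gamma> ^ (2 * k) > 0"
    using \<nu> \<gamma> d by (simp add: Gamma_real_pos add_nonneg_pos)
  show ?thesis unfolding alpha_coef_def
    by (rule mult_pos_pos[OF C Ik_props(3)[OF \<nu> b]])
qed

lemma alpha_sums:
  fixes \<nu> \<gamma> :: real and d :: nat
  assumes \<nu>: "\<nu> > 0" and \<gamma>: "\<gamma> > 0" and d: "d > 0"
  shows "(\<lambda>k. alpha_coef d \<nu> \<gamma> k) sums 1"
proof -
  define b where "b = \<gamma>\<^sup>2"
  define p where "p = real d / 2"
  have b: "b > 0" using \<gamma> by (simp add: b_def)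
  have p: "p > 0" using d by (simp add: p_def)
  define T where "T = (\<lambda>k a. Gamma (real k + p) / (fact k * Gamma p * Gamma \<nu>) * b ^ k *
      (indicator {0<..} a * (exp (- a) * a powr (\<nu> + p - 1) * (a + b) powr (- real k - p))))"
  have Tnn: "T k a \<ge> 0" for k a
    using \<nu> p by (auto simp: T_def indicator_def Gamma_real_pos add_nonneg_pos b less_imp_le)
  have pw: "(\<Sum>k. ennreal (T k a)) = ennreal (1 / Gamma \<nu> * (indicator {0<..} a * a powr (\<nu> - 1) * exp (- 1 * a)))" for a
  proof (cases "a > 0")
    case True
    have "(\<lambda>k. Gamma (real k + p) / (fact k * Gamma p) * b ^ k * (a + b) powr (- real k - p)) sums a powr (- p)"
      by (rule negbin_series) (use p True b in auto)
    then have "(\<lambda>k. (1 / Gamma \<nu> * exp (- a) * a powr (\<nu> + p - 1)) * (Gamma (real k + p) / (fact k * Gamma p) * b ^ k * (a + b) powr (- real k - p)))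
        sums ((1 / Gamma \<nu> * exp (- a) * a powr (\<nu> + p - 1)) * a powr (- p))"
      by (rule sums_mult)
    moreover have e1: "(1 / Gamma \<nu> * exp (- a) * a powr (\<nu> + p - 1)) * a powr (- p) = 1 / Gamma \<nu> * (indicator {0<..} a * a powr (\<nu> - 1) * exp (- 1 * a))"
      using True by (simp add: powr_add[symmetric] algebra_simps)
    moreover have e2: "(1 / Gamma \<nu> * exp (- a) * a powr (\<nu> + p - 1)) * (Gamma (real k + p) / (fact k * Gamma p) * b ^ k * (a + b) powr (- real k - p)) = T k a" for k
      using True by (simp add: T_def mult_ac)
    ultimately have "(\<lambda>k. T k a) sums (1 / Gamma \<nu> * (indicator {0<..} a * a powr (\<nu> - 1) * exp (- 1 * a)))"
      by (simp only: e1 e2)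
    then show ?thesis by (rule sums_ennreal[OF Tnn])
  next
    case False
    then show ?thesis by (simp add: T_def)
  qed
  have "(\<Sum>k. ennreal (alpha_coef d \<nu> \<gamma> k)) = (\<Sum>k. \<integral>\<^sup>+a. ennreal (T k a) \<partial>lborel)"
    unfolding alpha_ennreal[OF \<nu> \<gamma> d] by (simp add: T_def b_def p_def)
  also have "\<dots> = (\<integral>\<^sup>+a. (\<Sum>k. ennreal (T k a)) \<partial>lborel)"
    by (rule nn_integral_suminf[symmetric]) (simp add: T_def)
  also have "\<dots> = (\<integral>\<^sup>+a. ennreal (1 / Gamma \<nu>) * ennreal (indicator {0<..} a * a powr (\<nu> - 1) * exp (- 1 * a)) \<partial>lborel)"
    unfolding pw using \<nu> by (intro nn_integral_cong) (simp add: ennreal_mult'[symmetric])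
  also have "\<dots> = ennreal (1 / Gamma \<nu>) * ennreal (Gamma \<nu> / 1 powr \<nu>)"
    using gamma_scaled[OF \<nu>, of 1] by (subst nn_integral_cmult) auto
  also have "\<dots> = 1"
  proof -
    have g: "Gamma \<nu> > 0" using Gamma_real_pos[OF \<nu>] .
    have "ennreal (1 / Gamma \<nu>) * ennreal (Gamma \<nu> / 1 powr \<nu>) = ennreal (1 / Gamma \<nu> * (Gamma \<nu> / 1 powr \<nu>))"
      using g by (subst ennreal_mult) auto
    also have "1 / Gamma \<nu> * (Gamma \<nu> / 1 powr \<nu>) = 1" using g by simp
    finally show ?thesis by simp
  qed
  finally have S: "(\<Sum>k. ennreal (alpha_coef d \<nu> \<gamma> k)) = 1" .
  have nn: "\<And>k. 0 \<le> alpha_coef d \<nu> \<gamma> k" using alpha_pos[OF \<nu> \<gamma> d] less_imp_le by blast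
  have sm: "summable (\<lambda>k. alpha_coef d \<nu> \<gamma> k)"
    by (rule summable_suminf_not_top[OF nn]) (simp add: S)
  have "ennreal (\<Sum>k. alpha_coef d \<nu> \<gamma> k) = 1"
    using suminf_ennreal2[OF nn sm] S by simp
  then have "(\<Sum>k. alpha_coef d \<nu> \<gamma> k) = 1"
    using suminf_nonneg[OF sm nn] by simp
  then show ?thesis using sm by (simp add: sums_iff)
qed



lemma core:
  fixes z :: "'a::euclidean_space" and \<nu> \<sigma> \<gamma> :: real
  assumes \<nu>: "\<nu> > 0" and \<sigma>: "\<sigma> > 0" and \<gamma>_def: "\<gamma> = 1 / (\<sigma> * sqrt 2)"
    and GV: "\<And>c. c > 0 \<Longrightarrow> (\<integral>\<^sup>+x. ennreal (exp (- c * (norm (x::'a))\<^sup>2)) \<partial>lborel) = ennreal ((pi / c) powr (real DIM('a) / 2))"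
  shows "(\<integral>\<^sup>+t. ennreal (gauss_dens \<sigma> (z - t)) * ennreal (student_dens \<nu> t) \<partial>lborel)
       = (\<Sum>k. ennreal (alpha_coef DIM('a) \<nu> \<gamma> k * g_dens k \<sigma> z))"
proof -
  define p where "p = real DIM('a) / 2"
  define b where "b = \<gamma>\<^sup>2"
  define N where "N = (\<sigma> * sqrt (2 * pi)) ^ DIM('a)"
  define K where "K = 1 / (Gamma \<nu> * pi powr p)"
  define r where "r = (norm z)\<^sup>2"
  define h where "h = (\<lambda>a::real. indicator {0<..} a * a powr (\<nu> + p - 1) * exp (- a))"
  define F where "F = (\<lambda>a. K / N * h a * ((pi / (a + b)) powr p * exp (- (a * b / (a + b)) * r)))"
  define f where "f = (\<lambda>k a. exp (- a) * a powr (\<nu> + real DIM('a) / 2 - 1) * (a + \<gamma>\<^sup>2) powr (- real k - real DIM('a) / 2))"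
  define D where "D = (\<lambda>k. b ^ k * (b * r) ^ k * exp (- b * r) / (fact k * Gamma \<nu> * N))"
  define T where "T = (\<lambda>k a. D k * (indicator {0<..} a * f k a))"
  have p: "p > 0" by (simp add: p_def)
  have b: "b > 0" using \<sigma> by (simp add: b_def \<gamma>_def)
  have b_eq: "b = 1 / (2 * \<sigma>\<^sup>2)" by (simp add: b_def \<gamma>_def power2_eq_square)
  have N: "N > 0" using \<sigma> by (simp add: N_def)
  have K: "K > 0" using \<nu> by (simp add: K_def Gamma_real_pos)
  have r: "r \<ge> 0" by (simp add: r_def)
  have Gn: "Gamma \<nu> > 0" using Gamma_real_pos[OF \<nu>] .
  have hnn: "h a \<ge> 0" for a by (simp add: h_def indicator_def)
  have gd: "gauss_dens \<sigma> x = 1 / N * exp (- b * (norm x)\<^sup>2)" for x :: 'a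
    by (simp add: gauss_dens_def N_def b_eq)
  have sr: "ennreal (student_dens \<nu> t) = (\<integral>\<^sup>+a. ennreal (K * (h a * exp (- a * (norm t)\<^sup>2))) \<partial>lborel)" for t :: 'a
    unfolding student_repr[OF \<nu>] by (simp add: K_def p_def h_def mult.assoc)

  have "(\<integral>\<^sup>+t. ennreal (gauss_dens \<sigma> (z - t)) * ennreal (student_dens \<nu> t) \<partial>lborel)
     = (\<integral>\<^sup>+t. \<integral>\<^sup>+a. ennreal (1 / N * exp (- b * (norm (z - t))\<^sup>2)) * ennreal (K * (h a * exp (- a * (norm t)\<^sup>2))) \<partial>lborel \<partial>lborel)"
    unfolding sr gd by (intro nn_integral_cong nn_integral_cmult[symmetric]) (simp add: h_def)
  also have "\<dots> = (\<integral>\<^sup>+a. \<integral>\<^sup>+t. ennreal (1 / N * exp (- b * (norm (z - t))\<^sup>2)) * ennreal (K * (h a * exp (- a * (norm t)\<^sup>2))) \<partial>lborel \<partial>lborel)"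
    by (rule lborel_pair.Fubini') (simp add: h_def)
  also have "\<dots> = (\<integral>\<^sup>+a. ennreal (F a) \<partial>lborel)"
  proof (rule nn_integral_cong)
    fix a :: real
    have "(\<integral>\<^sup>+t. ennreal (1 / N * exp (- b * (norm (z - t))\<^sup>2)) * ennreal (K * (h a * exp (- a * (norm t)\<^sup>2))) \<partial>lborel)
        = (\<integral>\<^sup>+t. ennreal (K / N * h a) * ennreal (exp (- b * (norm (z - t))\<^sup>2) * exp (- a * (norm t)\<^sup>2)) \<partial>lborel)"
    proof (rule nn_integral_cong)
      fix t :: 'a
      show "ennreal (1 / N * exp (- b * (norm (z - t))\<^sup>2)) * ennreal (K * (h a * exp (- a * (norm t)\<^sup>2)))
          = ennreal (K / N * h a) * ennreal (exp (- b * (norm (z - t))\<^sup>2) * exp (- a * (norm t)\<^sup>2))"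
        using N K hnn[of a] by (simp add: ennreal_mult'[symmetric] ennreal_mult''[symmetric] mult_ac)
    qed
    also have "\<dots> = ennreal (K / N * h a) * (\<integral>\<^sup>+t. ennreal (exp (- b * (norm (z - t))\<^sup>2) * exp (- a * (norm t)\<^sup>2)) \<partial>lborel)"
      by (rule nn_integral_cmult) simp
    also have "\<dots> = ennreal (F a)"
    proof (cases "a > 0")
      case True
      have gc: "(\<integral>\<^sup>+t. ennreal (exp (- b * (norm (z - t))\<^sup>2) * exp (- a * (norm t)\<^sup>2)) \<partial>lborel)
          = ennreal ((pi / (a + b)) powr (real DIM('a) / 2) * exp (- (a * b / (a + b)) * (norm z)\<^sup>2))"
        by (rule gauss_conv[OF True b GV])
      show ?thesis
        unfolding gc F_def p_def[symmetric] r_def[symmetric]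
        using N K hnn[of a] by (simp add: ennreal_mult'[symmetric] mult_ac)
    next
      case False
      then show ?thesis by (simp add: h_def F_def)
    qed
    finally show "(\<integral>\<^sup>+t. ennreal (1 / N * exp (- b * (norm (z - t))\<^sup>2)) * ennreal (K * (h a * exp (- a * (norm t)\<^sup>2))) \<partial>lborel)
        = ennreal (F a)" .
  qed
  also have "\<dots> = (\<integral>\<^sup>+a. (\<Sum>k. ennreal (T k a)) \<partial>lborel)"
  proof (rule nn_integral_cong)
    fix a :: real
    have Tnn: "T k a \<ge> 0" for k
      using N Gn b r by (simp add: T_def D_def f_def indicator_def)
    have "(\<lambda>k. T k a) sums F a"
    proof (cases "a > 0")
      case True
      define x where "x = b * (b * r) / (a + b)"
      define Q where "Q = exp (- a) * a powr (\<nu> + p - 1) * (a + b) powr (- p) * exp (- b * r) / (Gamma \<nu> * N)"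
      have ab: "a + b > 0" using True b by simp
      have "(\<lambda>k. x ^ k /\<^sub>R fact k) sums exp x" by (rule exp_converges)
      then have "(\<lambda>k. Q * (x ^ k /\<^sub>R fact k)) sums (Q * exp x)" by (rule sums_mult)
      moreover have "Q * (x ^ k /\<^sub>R fact k) = T k a" for k
      proof -
        have e1: "(a + b) powr (- real k - p) = (a + b) powr (- p) / (a + b) ^ k"
        proof -
          have "(a + b) powr (- real k - p) = (a + b) powr (- p + - real k)"
            by (rule arg_cong[where f="\<lambda>e. (a + b) powr e"]) simp
          also have "\<dots> = (a + b) powr (- p) * (a + b) powr (- real k)" by (rule powr_add)
          also have "(a + b) powr (- real k) = 1 / (a + b) ^ k"
            using ab by (simp add: powr_minus_divide powr_realpow)
          finally show ?thesis by simp
        qed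
        have e2: "x ^ k = b ^ k * (b * r) ^ k / (a + b) ^ k"
          by (simp add: x_def power_divide power_mult_distrib)
        show ?thesis
          unfolding T_def D_def f_def p_def[symmetric] b_def[symmetric] e1 e2 Q_def
          using True by (simp add: field_simps)
      qed
      moreover have "Q * exp x = F a"
      proof -
        have e3: "(pi / (a + b)) powr p = pi powr p * (a + b) powr (- p)"
          using ab by (simp add: powr_divide powr_minus_divide)
        have e4: "exp (- (a * b / (a + b)) * r) = exp (- b * r) * exp x"
        proof -
          have "- (a * b / (a + b)) * r = - b * r + x"
            using ab by (simp add: x_def field_simps)
          then show ?thesis by (simp add: exp_add[symmetric])
        qed
        show ?thesis
          unfolding F_def e3 e4 Q_def h_def K_def using True by (simp add: field_simps)
      qed
      ultimately show ?thesis by simp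
    next
      case False
      then show ?thesis by (simp add: T_def F_def h_def)
    qed
    then show "ennreal (F a) = (\<Sum>k. ennreal (T k a))"
      by (rule sums_ennreal[OF Tnn, symmetric])
  qed
  also have "\<dots> = (\<Sum>k. \<integral>\<^sup>+a. ennreal (T k a) \<partial>lborel)"
    by (rule nn_integral_suminf) (simp add: T_def f_def)
  also have "\<dots> = (\<Sum>k. ennreal (alpha_coef DIM('a) \<nu> \<gamma> k * g_dens k \<sigma> z))"
  proof (rule suminf_cong)
    fix k
    have Dnn: "D k \<ge> 0" using N Gn b r by (simp add: D_def)
    have b2: "\<gamma>\<^sup>2 > 0" using b by (simp add: b_def)
    have "(\<integral>\<^sup>+a. ennreal (T k a) \<partial>lborel) = (\<integral>\<^sup>+a. ennreal (D k) * ennreal (indicator {0<..} a * f k a) \<partial>lborel)"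
      by (intro nn_integral_cong) (simp add: T_def ennreal_mult'[OF Dnn])
    also have "\<dots> = ennreal (D k) * (\<integral>\<^sup>+a. ennreal (indicator {0<..} a * f k a) \<partial>lborel)"
      by (rule nn_integral_cmult) (simp add: f_def)
    also have "(\<integral>\<^sup>+a. ennreal (indicator {0<..} a * f k a) \<partial>lborel) = ennreal (LBINT a:{0<..}. f k a)"
      using Ik_props(2)[OF \<nu> b2, of "DIM('a)" k] by (simp add: f_def)
    also have "ennreal (D k) * ennreal (LBINT a:{0<..}. f k a) = ennreal (D k * (LBINT a:{0<..}. f k a))"
      by (simp add: ennreal_mult'[OF Dnn])
    also have "D k * (LBINT a:{0<..}. f k a) = alpha_coef DIM('a) \<nu> \<gamma> k * g_dens k \<sigma> z"
    proof -
      have g1: "Gamma (real k + real DIM('a) / 2) > 0" by (simp add: Gamma_real_pos add_nonneg_pos)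
      have g2: "Gamma (real DIM('a) / 2) > 0" by (simp add: Gamma_real_pos)
      have e5: "\<gamma> ^ (2 * k) = b ^ k" by (simp add: b_def power_mult)
      have e6: "(norm z)\<^sup>2 / (2 * \<sigma>\<^sup>2) = b * r" by (simp add: b_eq r_def)
      have e7: "- (norm z)\<^sup>2 / (2 * \<sigma>\<^sup>2) = - (b * r)" by (simp add: b_eq r_def)
      have fk: "(\<lambda>a. exp (- a) * a powr (\<nu> + real DIM('a) / 2 - 1) * (a + \<gamma>\<^sup>2) powr (- real k - real DIM('a) / 2)) = f k"
        by (simp add: f_def)
      show ?thesis
        unfolding alpha_coef_def g_dens_def e5 e6 e7 fk D_def N_def[symmetric]
        using g1 g2 Gn N by (simp add: field_simps less_imp_neq[OF g2, symmetric])
    qed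
    finally show "(\<integral>\<^sup>+a. ennreal (T k a) \<partial>lborel) = ennreal (alpha_coef DIM('a) \<nu> \<gamma> k * g_dens k \<sigma> z)" .
  qed
  finally show ?thesis .
qed



lemma g_dens_nonneg:
  assumes "\<sigma> > 0"
  shows "g_dens k \<sigma> (z::'a::euclidean_space) \<ge> 0"
proof -
  have g1: "Gamma (real k + real DIM('a) / 2) > 0" by (simp add: Gamma_real_pos add_nonneg_pos)
  have g2: "Gamma (real DIM('a) / 2) > 0" by (simp add: Gamma_real_pos)
  show ?thesis unfolding g_dens_def using assms g1 g2 by (intro mult_nonneg_nonneg divide_nonneg_pos) auto
qed

lemma density_integral_one:
  assumes "prob_space M" "distributed M lborel X (\<lambda>x. ennreal (f x))"
  shows "(\<integral>\<^sup>+x. ennreal (f x) \<partial>lborel) = 1"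
proof -
  interpret prob_space M by fact
  have "prob_space (density lborel (\<lambda>x. ennreal (f x)))"
    using distributed_distr_eq_density[OF assms(2)] prob_space_distr[OF distributed_measurable[OF assms(2)]] by simp
  then have "emeasure (density lborel (\<lambda>x. ennreal (f x))) (space lborel) = 1"
    by (metis prob_space.emeasure_space_1 space_density)
  moreover have m: "(\<lambda>x. ennreal (f x)) \<in> borel_measurable lborel"
    using distributed_borel_measurable[OF assms(2)] .
  ultimately show ?thesis using emeasure_density[OF m, of UNIV] by simp
qed

theorem theorem1:
  fixes M :: "'b measure" and X T :: "'b \<Rightarrow> 'a::euclidean_space"
    and \<nu> \<sigma> \<gamma> :: real
  assumes "prob_space M"
    and "\<nu> > 0" and "\<sigma> > 0"
    and "distributed M lborel X (\<lambda>x. ennreal (gauss_dens \<sigma> x))"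
    and "distributed M lborel T (\<lambda>t. ennreal (student_dens \<nu> t))"
    and "prob_space.indep_var M borel X borel T"
    and "\<gamma> = 1 / (\<sigma> * sqrt 2)"
  shows "distributed M lborel (\<lambda>\<omega>. X \<omega> + T \<omega>)
           (\<lambda>z. ennreal (\<Sum>k. alpha_coef DIM('a) \<nu> \<gamma> k * g_dens k \<sigma> z))
         \<and> (\<forall>k. alpha_coef DIM('a) \<nu> \<gamma> k > 0)
         \<and> ((\<lambda>k. alpha_coef DIM('a) \<nu> \<gamma> k) sums 1)"
proof -
  interpret prob_space M by fact
  have \<nu>: "\<nu> > 0" and \<sigma>: "\<sigma> > 0" by fact+
  have d: "DIM('a) > 0" by simp
  have \<gamma>: "\<gamma> > 0" using \<sigma> by (simp add: assms(7))
  have one: "(\<integral>\<^sup>+x. ennreal (gauss_dens \<sigma> (x::'a)) \<partial>lborel) = 1"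
    by (rule density_integral_one[OF assms(1) assms(4)])
  have oneT: "(\<integral>\<^sup>+x. ennreal (student_dens \<nu> (x::'a)) \<partial>lborel) = 1"
    by (rule density_integral_one[OF assms(1) assms(5)])
  have GV: "\<And>c. c > 0 \<Longrightarrow> (\<integral>\<^sup>+x. ennreal (exp (- c * (norm (x::'a))\<^sup>2)) \<partial>lborel) = ennreal ((pi / c) powr (real DIM('a) / 2))"
    using gauss_value[OF \<sigma> _ one] by blast
  have dist: "distributed M lborel (\<lambda>\<omega>. X \<omega> + T \<omega>)
      (\<lambda>z. \<integral>\<^sup>+y. ennreal (gauss_dens \<sigma> (z - y)) * ennreal (student_dens \<nu> y) \<partial>lborel)"
    by (rule distributed_add_eucl[OF assms(6) assms(4) assms(5)])
  have apos: "\<forall>k. alpha_coef DIM('a) \<nu> \<gamma> k > 0" using alpha_pos[OF \<nu> \<gamma> d] by blast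
  define N where "N = (\<sigma> * sqrt (2 * pi)) ^ DIM('a)"
  have N: "N > 0" using \<sigma> by (simp add: N_def)
  have gle: "gauss_dens \<sigma> x \<le> 1 / N" for x :: 'a
    using N by (simp add: gauss_dens_def N_def[symmetric] divide_right_mono)
  have eq: "(\<integral>\<^sup>+y. ennreal (gauss_dens \<sigma> (z - y)) * ennreal (student_dens \<nu> y) \<partial>lborel)
      = ennreal (\<Sum>k. alpha_coef DIM('a) \<nu> \<gamma> k * g_dens k \<sigma> z)" for z :: 'a
  proof -
    have nn: "0 \<le> alpha_coef DIM('a) \<nu> \<gamma> k * g_dens k \<sigma> z" for k
      using apos g_dens_nonneg[OF \<sigma>, of k z] by (simp add: less_imp_le)
    have c: "(\<integral>\<^sup>+y. ennreal (gauss_dens \<sigma> (z - y)) * ennreal (student_dens \<nu> y) \<partial>lborel)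
        = (\<Sum>k. ennreal (alpha_coef DIM('a) \<nu> \<gamma> k * g_dens k \<sigma> z))"
      by (rule core[OF \<nu> \<sigma> assms(7) GV])
    have "(\<integral>\<^sup>+y. ennreal (gauss_dens \<sigma> (z - y)) * ennreal (student_dens \<nu> y) \<partial>lborel)
        \<le> (\<integral>\<^sup>+y. ennreal (1 / N) * ennreal (student_dens \<nu> (y::'a)) \<partial>lborel)"
    proof (rule Nonnegative_Lebesgue_Integration.nn_integral_mono)
      fix y :: 'a
      have "ennreal (gauss_dens \<sigma> (z - y)) \<le> ennreal (1 / N)" by (rule ennreal_leI[OF gle])
      then show "ennreal (gauss_dens \<sigma> (z - y)) * ennreal (student_dens \<nu> y) \<le> ennreal (1 / N) * ennreal (student_dens \<nu> y)"
        by (rule mult_right_mono) simp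
    qed
    also have "\<dots> = ennreal (1 / N)"
      using distributed_borel_measurable[OF assms(5)] by (subst nn_integral_cmult) (auto simp: oneT)
    finally have "(\<Sum>k. ennreal (alpha_coef DIM('a) \<nu> \<gamma> k * g_dens k \<sigma> z)) \<noteq> top"
      unfolding c by (auto simp: top_unique)
    then have sm: "summable (\<lambda>k. alpha_coef DIM('a) \<nu> \<gamma> k * g_dens k \<sigma> z)"
      by (rule summable_suminf_not_top[OF nn])
    show ?thesis unfolding c by (rule suminf_ennreal2[OF nn sm])
  qed
  have "distributed M lborel (\<lambda>\<omega>. X \<omega> + T \<omega>)
           (\<lambda>z. ennreal (\<Sum>k. alpha_coef DIM('a) \<nu> \<gamma> k * g_dens k \<sigma> z))"
    using dist unfolding eq .
  then show ?thesis using apos alpha_sums[OF \<nu> \<gamma> d] by blast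
qed

end
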